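(* Let $s>0$, $r>4+2s$, $\Omega=[-r,r]$, and let $K:\mathbb{R}\to\mathbb{R}$ be bounded and even with ${\rm supp}(K_+)=[-2,2]$ and ${\rm supp}(K_-)=[-2-s,-2]\cup[2,2+s]$. Assume $K_+$ is nonincreasing on $(0,\infty)$ and $\int_0^2K_+(y)\,dy\ge1+\int_{\mathbb{R}}K_-(y)\,dy$. Let $$B_1=\{u\in L^2(\Omega):\ u(x)=1\text{ for }x>1,\ u(x)=-1\text{ for }x<-1,\ u\text{ odd and nondecreasing}\}.$$ Then the map $u\mapsto f(Tu)$ sends $B_1$ into $B_1$.
   Context: $K_+=\max(K,0)$ and $K_-=\max(-K,0)$ denote the positive and negative parts of $K$, so $K=K_+-K_-$. $f$ is the saturation function $f(x)=1$ for $x>1$, $f(x)=x$ for $x\in[-1,1]$, $f(x)=-1$ for $x<-1$. For $u\in L^2(\Omega)$, $Tu(x)=\int_{\mathbb{R}}K(x-y)\widetilde u(y)\,dy$ for $x\in\Omega$, where $\widetilde u$ is the extension of $u$ by $0$ outside $\Omega$. *)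

theory Defs
  imports "HOL-Analysis.Analysis"
begin

definition sat :: "real \<Rightarrow> real" where
  "sat x = (if x > 1 then 1 else if x < -1 then -1 else x)"

definition zext :: "real \<Rightarrow> (real \<Rightarrow> real) \<Rightarrow> real \<Rightarrow> real" where
  "zext r u y = (if y \<in> {-r..r} then u y else 0)"

definition Top :: "(real \<Rightarrow> real) \<Rightarrow> real \<Rightarrow> (real \<Rightarrow> real) \<Rightarrow> real \<Rightarrow> real" where
  "Top K r u x = (LINT y|lborel. K (x - y) * zext r u y)"

text \<open>The set B_1 (functions on Omega = [-r,r], given pointwise).\<close>
definition B1 :: "real \<Rightarrow> (real \<Rightarrow> real) set" where
  "B1 r = {u. (\<forall>x\<in>{-r..r}. x > 1 \<longrightarrow> u x = 1)
            \<and> (\<forall>x\<in>{-r..r}. x < -1 \<longrightarrow> u x = -1)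
            \<and> (\<forall>x\<in>{-r..r}. u (-x) = - u x)
            \<and> mono_on {-r..r} u}"

end

theory Submission imports Defs begin

lemma intg:
  fixes f :: "real \<Rightarrow> real"
  assumes "f \<in> borel_measurable borel" "\<And>y. \<bar>f y\<bar> \<le> C * indicator {a..b} y"
  shows "integrable lborel f"
proof (rule Bochner_Integration.integrable_bound[where f="\<lambda>y. C * indicator {a..b} y"])
  have "emeasure lborel {a..b} < \<infinity>"
    by (cases "a \<le> b") auto
  then show "integrable lborel (\<lambda>y. C * indicator {a..b} y)"
    by (intro integrable_mult_right integrable_real_indicator) auto
  show "f \<in> borel_measurable lborel" using assms(1) by simp
  show "AE x in lborel. norm (f x) \<le> norm (C * indicator {a..b} x)"
    using assms(2) by (auto intro!: AE_I2 order_trans[OF _ abs_ge_self])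
qed

lemma zext_meas:
  assumes "mono_on {-r..r} u"
  shows "zext r u \<in> borel_measurable borel"
proof -
  have "u \<in> borel_measurable (restrict_space borel {-r..r})"
    by (rule borel_measurable_mono_on_fnc[OF assms])
  then have "(\<lambda>x. indicator {-r..r} x *\<^sub>R u x) \<in> borel_measurable borel"
    by (subst (asm) borel_measurable_restrict_space_iff) auto
  moreover have "(\<lambda>x. indicator {-r..r} x *\<^sub>R u x) = zext r u"
    by (auto simp: zext_def indicator_def fun_eq_iff)
  ultimately show ?thesis by simp
qed

lemma L:
  fixes P :: "real \<Rightarrow> real"
  assumes Pm[measurable]: "P \<in> borel_measurable borel" and Pb: "\<And>y. \<bar>P y\<bar> \<le> C"
    and Pnn: "\<And>y. 0 \<le> P y" and Pev: "\<And>y. P (-y) = P y"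
    and Pmono: "\<And>x y. 0 < x \<Longrightarrow> x \<le> y \<Longrightarrow> P y \<le> P x"
    and ab: "a \<le> 0" "0 < b" "a + 2 \<le> b"
  shows "(\<integral>z. indicator {0..2} z * P z \<partial>lborel) \<le> (\<integral>z. indicator {a..<b} z * P z \<partial>lborel)"
proof -
  have C0: "0 \<le> C" using Pb[of 0] by simp
  have ib: "integrable lborel (\<lambda>z. indicator S z * P (c + d * z))" if "S \<in> sets borel" "S \<subseteq> {l..h}" for S l h c d
  proof (rule intg[where C=C and a=l and b=h])
    have [measurable]: "S \<in> sets borel" using that by simp
    show "(\<lambda>z. indicator S z * P (c + d * z)) \<in> borel_measurable borel" by measurable
    fix y show "\<bar>indicator S y * P (c + d * y)\<bar> \<le> C * indicator {l..h} y"
      using that Pb[of "c + d*y"] C0 by (auto simp: indicator_def)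
  qed
  have i1: "integrable lborel (\<lambda>z. indicator {0..2} z * P z)"
    using ib[of "{0..2}" 0 2 0 1] by fastforce
  have i2: "integrable lborel (\<lambda>z. indicator {0..<b} z * P z)"
    using ib[of "{0..<b}" 0 b 0 1] by fastforce
  have i3: "integrable lborel (\<lambda>z. indicator {b<..2} z * P (z - b))"
    using ib[of "{b<..2}" b 2 "-b" 1] by fastforce
  have i4: "integrable lborel (\<lambda>z. indicator {b-2..<0} z * P z)"
    using ib[of "{b-2..<0}" "b-2" 0 0 1] by fastforce
  have i5: "integrable lborel (\<lambda>z. indicator {a..<b} z * P z)"
    using ib[of "{a..<b}" a b 0 1] by fastforce
  have "(\<integral>z. indicator {0..2} z * P z \<partial>lborel) \<le>
      (\<integral>z. indicator {0..<b} z * P z + indicator {b<..2} z * P (z - b) \<partial>lborel)"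
  proof (rule integral_mono_AE[OF i1 Bochner_Integration.integrable_add[OF i2 i3]])
    show "AE z in lborel. indicator {0..2} z * P z \<le> indicator {0..<b} z * P z + indicator {b<..2} z * P (z - b)"
      using AE_lborel_singleton[of b]
    proof eventually_elim
      case (elim z)
      show ?case
      proof (cases "z \<in> {0..2}")
        case False then show ?thesis using Pnn[of z] Pnn[of "z-b"] by (auto simp: indicator_def)
      next
        case True
        show ?thesis
        proof (cases "z < b")
          case True then show ?thesis using \<open>z \<in> {0..2}\<close> Pnn[of "z-b"] by (auto simp: indicator_def)
        next
          case False
          then have "z > b" using elim by auto
          then show ?thesis using \<open>z \<in> {0..2}\<close> Pmono[of "z-b" z] ab by (auto simp: indicator_def)
        qed
      qed
    qed
  qed
  also have "\<dots> = (\<integral>z. indicator {0..<b} z * P z \<partial>lborel) + (\<integral>z. indicator {b<..2} z * P (z - b) \<partial>lborel)"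
    by (rule Bochner_Integration.integral_add[OF i2 i3])
  also have "(\<integral>z. indicator {b<..2} z * P (z - b) \<partial>lborel) = (\<integral>z. indicator {b-2..<0} z * P z \<partial>lborel)"
    apply (subst lborel_integral_real_affine[where c="-1" and t=b], simp)
    apply (simp only: abs_neg_one scaleR_one)
    apply (rule Bochner_Integration.integral_cong[OF refl])
    using Pev by (auto simp: indicator_def)
  also have "(\<integral>z. indicator {0..<b} z * P z \<partial>lborel) + (\<integral>z. indicator {b-2..<0} z * P z \<partial>lborel)
      = (\<integral>z. indicator {0..<b} z * P z + indicator {b-2..<0} z * P z \<partial>lborel)"
    by (rule Bochner_Integration.integral_add[symmetric, OF i2 i4])
  also have "\<dots> \<le> (\<integral>z. indicator {a..<b} z * P z \<partial>lborel)"
    apply (rule integral_mono[OF Bochner_Integration.integrable_add[OF i2 i4] i5])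
    using ab Pnn by (auto simp: indicator_def)
  finally show ?thesis .
qed

theorem mainTheorem11:
  fixes s r :: real and K :: "real \<Rightarrow> real"
  assumes s_pos: "s > 0"
    and r_big: "r > 4 + 2 * s"
    and K_meas: "K \<in> borel_measurable lborel"
    and K_bdd: "bounded (range K)"
    and K_even: "\<forall>x. K (- x) = K x"
    and supp_pos: "closure {y. max (K y) 0 \<noteq> 0} = {-2..2}"
    and supp_neg: "closure {y. max (- K y) 0 \<noteq> 0} = {-2-s..-2} \<union> {2..2+s}"
    and Kp_mono: "\<forall>x y. 0 < x \<longrightarrow> x \<le> y \<longrightarrow> max (K y) 0 \<le> max (K x) 0"
    and K_mass: "(LINT y:{0..2}|lborel. max (K y) 0) \<ge> 1 + (LINT y|lborel. max (- K y) 0)"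
  shows "\<forall>u\<in>B1 r. (\<lambda>x. sat (Top K r u x)) \<in> B1 r"
proof
  fix u assume uB: "u \<in> B1 r"
  have u1: "\<And>x. x \<in> {-r..r} \<Longrightarrow> x > 1 \<Longrightarrow> u x = 1"
   and u2: "\<And>x. x \<in> {-r..r} \<Longrightarrow> x < -1 \<Longrightarrow> u x = -1"
   and uodd: "\<And>x. x \<in> {-r..r} \<Longrightarrow> u (-x) = - u x"
   and umono: "mono_on {-r..r} u" using uB by (auto simp: B1_def)
  have Km[measurable]: "K \<in> borel_measurable borel" using K_meas by simp
  obtain C where C: "\<And>y. \<bar>K y\<bar> \<le> C"
    using K_bdd unfolding bounded_iff by auto
  have C0: "0 \<le> C" using C[of 0] by simp
  define P where "P y = max (K y) 0" for y
  define N where "N y = max (- K y) 0" for y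
  define U where "U = zext r u"
  have Pm[measurable]: "P \<in> borel_measurable borel" unfolding P_def by measurable
  have Nm[measurable]: "N \<in> borel_measurable borel" unfolding N_def by measurable
  have Um[measurable]: "U \<in> borel_measurable borel" unfolding U_def by (rule zext_meas[OF umono])
  have KPN: "\<And>y. K y = P y - N y" by (auto simp: P_def N_def)
  have Pnn: "\<And>y. 0 \<le> P y" and Nnn: "\<And>y. 0 \<le> N y" by (auto simp: P_def N_def)
  have PC: "\<And>y. \<bar>P y\<bar> \<le> C" and NC: "\<And>y. \<bar>N y\<bar> \<le> C"
    using C C0 by (auto simp: P_def N_def abs_le_iff)
  have Pev: "\<And>y. P (-y) = P y" and Nev: "\<And>y. N (-y) = N y" using K_even by (auto simp: P_def N_def)
  have Pmono: "\<And>x y. 0 < x \<Longrightarrow> x \<le> y \<Longrightarrow> P y \<le> P x" using Kp_mono by (auto simp: P_def)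
  have P0: "\<And>y. \<bar>y\<bar> > 2 \<Longrightarrow> P y = 0"
  proof -
    fix y :: real assume "\<bar>y\<bar> > 2"
    hence "y \<notin> closure {y. max (K y) 0 \<noteq> 0}" using supp_pos by auto
    thus "P y = 0" using closure_subset[of "{y. max (K y) 0 \<noteq> 0}"] by (auto simp: P_def)
  qed
  have N0: "\<And>y. \<bar>y\<bar> < 2 \<or> \<bar>y\<bar> > 2 + s \<Longrightarrow> N y = 0"
  proof -
    fix y :: real assume "\<bar>y\<bar> < 2 \<or> \<bar>y\<bar> > 2 + s"
    hence "y \<notin> closure {y. max (- K y) 0 \<noteq> 0}" using supp_neg by auto
    thus "N y = 0" using closure_subset[of "{y. max (- K y) 0 \<noteq> 0}"] by (auto simp: N_def)
  qed
  have Kpos: "\<And>y. \<bar>y\<bar> < 2 \<Longrightarrow> 0 \<le> K y" using N0 KPN Pnn by (metis diff_zero)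
  have Kzero: "\<And>y. \<bar>y\<bar> > 2 + s \<Longrightarrow> K y = 0" using N0 P0 KPN s_pos by force
  have ur: "\<And>x. x \<in> {-r..r} \<Longrightarrow> -1 \<le> u x \<and> u x \<le> 1"
  proof -
    fix x assume x: "x \<in> {-r..r}"
    have "u (-r) \<le> u x" "u x \<le> u r" using x r_big by (auto intro!: mono_onD[OF umono])
    moreover have "u r = 1" "u (-r) = -1" using u1[of r] u2[of "-r"] r_big s_pos by auto
    ultimately show "-1 \<le> u x \<and> u x \<le> 1" by simp
  qed
  have U1: "\<And>y. \<bar>U y\<bar> \<le> indicator {-r..r} y" using ur by (force simp: U_def zext_def indicator_def abs_le_iff)
  have Uodd: "\<And>y. U (-y) = - U y" using uodd by (auto simp: U_def zext_def)
  have Uone: "\<And>y. 1 < y \<Longrightarrow> y \<le> r \<Longrightarrow> U y = 1" using u1 by (auto simp: U_def zext_def)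
  have Umone: "\<And>y. -r \<le> y \<Longrightarrow> y < -1 \<Longrightarrow> U y = -1" using u2 by (auto simp: U_def zext_def)
  have Umono: "\<And>a b. -r \<le> a \<Longrightarrow> a \<le> b \<Longrightarrow> b \<le> r \<Longrightarrow> U a \<le> U b"
    using umono by (auto simp: U_def zext_def intro!: mono_onD[OF umono])
  have Unn: "\<And>y. 0 \<le> y \<Longrightarrow> 0 \<le> U y"
  proof -
    fix y :: real assume y: "0 \<le> y"
    have "U 0 = 0" using Uodd[of 0] by simp
    show "0 \<le> U y"
    proof (cases "y \<le> r")
      case True then show ?thesis using Umono[of 0 y] \<open>U 0 = 0\<close> y r_big by auto
    qed (simp add: U_def zext_def)
  qed
  have Tdef: "\<And>x. Top K r u x = (\<integral>y. K (x - y) * U y \<partial>lborel)" by (simp add: Top_def U_def)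
  have Tneg: "\<And>x. Top K r u x = - (\<integral>y. K (x + y) * U y \<partial>lborel)"
  proof -
    fix x
    have "(\<integral>y. K (x - y) * U y \<partial>lborel) = (\<integral>y. - (K (x + y) * U y) \<partial>lborel)"
      by (subst lborel_integral_real_affine[where c="-1" and t=0]) (simp_all add: Uodd)
    then show "Top K r u x = - (\<integral>y. K (x + y) * U y \<partial>lborel)" by (simp add: Tdef)
  qed
  have Todd: "\<And>x. Top K r u (-x) = - Top K r u x"
  proof -
    fix x
    have "\<And>y. K (- x + y) = K (x - y)" using K_even by (metis minus_diff_eq uminus_add_conv_diff)
    then show "Top K r u (-x) = - Top K r u x" unfolding Tneg[of "-x"] Tdef[of x] by simp
  qed
  have Tconv: "\<And>x. Top K r u x = (\<integral>z. K z * U (x - z) \<partial>lborel)"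
    by (subst Tdef, subst lborel_integral_real_affine[where c="-1" and t=x]) simp_all
  have iconv: "\<And>x. integrable lborel (\<lambda>z. K z * U (x - z))"
  proof -
    fix x
    show "integrable lborel (\<lambda>z. K z * U (x - z))"
    proof (rule intg[where C=C and a="x-r" and b="x+r"])
      show "(\<lambda>z. K z * U (x - z)) \<in> borel_measurable borel" by measurable
      fix y
      have "\<bar>K y * U (x - y)\<bar> \<le> C * indicator {-r..r} (x - y)"
        unfolding abs_mult by (rule mult_mono[OF C U1]) (use C0 in auto)
      also have "indicator {-r..r} (x - y) = (indicator {x-r..x+r} y :: real)"
        by (auto simp: indicator_def)
      finally show "\<bar>K y * U (x - y)\<bar> \<le> C * indicator {x-r..x+r} y" .
    qed
  qed
  have Tmono: "\<And>x x'. -1 \<le> x \<Longrightarrow> x \<le> x' \<Longrightarrow> x' \<le> 1 \<Longrightarrow> Top K r u x \<le> Top K r u x'"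
  proof -
    fix x x' :: real assume xx: "-1 \<le> x" "x \<le> x'" "x' \<le> 1"
    show "Top K r u x \<le> Top K r u x'"
      unfolding Tconv
    proof (rule integral_mono_AE[OF iconv iconv])
      show "AE z in lborel. K z * U (x - z) \<le> K z * U (x' - z)"
        using AE_lborel_singleton[of 2] AE_lborel_singleton[of "-2"]
      proof eventually_elim
        case (elim z)
        consider "\<bar>z\<bar> < 2" | "\<bar>z\<bar> > 2 + s" | "2 < z \<and> z \<le> 2 + s" | "-2-s \<le> z \<and> z < -2"
          using elim by linarith
        then show ?case
        proof cases
          case 1
          then show ?thesis using xx r_big s_pos
            by (intro mult_left_mono[OF Umono Kpos]) auto
        next
          case 2 then show ?thesis using Kzero by simp
        next
          case 3
          then have "U (x - z) = -1" "U (x' - z) = -1" using xx r_big s_pos by (auto intro!: Umone)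
          then show ?thesis by simp
        next
          case 4
          then have "U (x - z) = 1" "U (x' - z) = 1" using xx r_big s_pos by (auto intro!: Uone)
          then show ?thesis by simp
        qed
      qed
    qed
  qed
  have Kmass': "1 + (\<integral>y. N y \<partial>lborel) \<le> (\<integral>z. indicator {0..2} z * P z \<partial>lborel)"
    using K_mass by (simp add: set_lebesgue_integral_def P_def N_def)
  have Tbig: "\<And>x. 1 < x \<Longrightarrow> x \<le> r \<Longrightarrow> 1 \<le> Top K r u x"
  proof -
    fix x :: real assume x: "1 < x" "x \<le> r"
    define g where "g y = indicator {1<..r} y * P (x - y) + indicator {-r..<-1} y * P (x + y) - N (x - y) - N (x + y)" for y
    have iA1: "integrable lborel (\<lambda>y. K (x - y) * U y)"
    proof (rule intg[where C=C and a="-r" and b="r"])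
      show "(\<lambda>y. K (x - y) * U y) \<in> borel_measurable borel" by measurable
      fix y show "\<bar>K (x - y) * U y\<bar> \<le> C * indicator {-r..r} y"
        unfolding abs_mult by (rule mult_mono[OF C U1]) (use C0 in auto)
    qed
    have iA2: "integrable lborel (\<lambda>y. K (x + y) * U y)"
    proof (rule intg[where C=C and a="-r" and b="r"])
      show "(\<lambda>y. K (x + y) * U y) \<in> borel_measurable borel" by measurable
      fix y show "\<bar>K (x + y) * U y\<bar> \<le> C * indicator {-r..r} y"
        unfolding abs_mult by (rule mult_mono[OF C U1]) (use C0 in auto)
    qed
    have ig1: "integrable lborel (\<lambda>y. indicator {1<..r} y * P (x - y))"
    proof (rule intg[where C=C and a="-r" and b="r"])
      show "(\<lambda>y. indicator {1<..r} y * P (x - y)) \<in> borel_measurable borel" by measurable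
      fix y show "\<bar>indicator {1<..r} y * P (x - y)\<bar> \<le> C * indicator {-r..r} y"
        using PC[of "x-y"] C0 r_big by (auto simp: indicator_def)
    qed
    have ig2: "integrable lborel (\<lambda>y. indicator {-r..<-1} y * P (x + y))"
    proof (rule intg[where C=C and a="-r" and b="r"])
      show "(\<lambda>y. indicator {-r..<-1} y * P (x + y)) \<in> borel_measurable borel" by measurable
      fix y show "\<bar>indicator {-r..<-1} y * P (x + y)\<bar> \<le> C * indicator {-r..r} y"
        using PC[of "x+y"] C0 r_big by (auto simp: indicator_def)
    qed
    have ig3: "integrable lborel (\<lambda>y. N (x - y))"
    proof (rule intg[where C=C and a="x-2-s" and b="x+2+s"])
      show "(\<lambda>y. N (x - y)) \<in> borel_measurable borel" by measurable
      fix y show "\<bar>N (x - y)\<bar> \<le> C * indicator {x-2-s..x+2+s} y"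
      proof (cases "\<bar>x - y\<bar> > 2 + s")
        case True then show ?thesis using N0[of "x-y"] C0 by (auto simp: indicator_def)
      next
        case False then show ?thesis using NC[of "x-y"] by (auto simp: indicator_def abs_le_iff)
      qed
    qed
    have ig4: "integrable lborel (\<lambda>y. N (x + y))"
    proof (rule intg[where C=C and a="-x-2-s" and b="-x+2+s"])
      show "(\<lambda>y. N (x + y)) \<in> borel_measurable borel" by measurable
      fix y show "\<bar>N (x + y)\<bar> \<le> C * indicator {-x-2-s..-x+2+s} y"
      proof (cases "\<bar>x + y\<bar> > 2 + s")
        case True then show ?thesis using N0[of "x+y"] C0 by (auto simp: indicator_def)
      next
        case False then show ?thesis using NC[of "x+y"] by (auto simp: indicator_def abs_le_iff)
      qed
    qed
    have hP: "indicator {1<..r} y * P (x - y) + indicator {-r..<-1} y * P (x + y) \<le> (P (x - y) - P (x + y)) * U y" for y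
    proof -
      consider "1 < y \<and> y \<le> r" | "-r \<le> y \<and> y < -1" | "y < -r \<or> y > r" | "-1 \<le> y \<and> y \<le> 1"
        by linarith
      then show ?thesis
      proof cases
        case 1 then show ?thesis using Uone[of y] P0[of "x+y"] x by (auto simp: indicator_def)
      next
        case 2 then show ?thesis using Umone[of y] P0[of "x-y"] x by (auto simp: indicator_def)
      next
        case 3
        then have "U y = 0" using U1[of y] by (auto simp: indicator_def)
        then show ?thesis using 3 x by (auto simp: indicator_def)
      next
        case 4
        have "0 \<le> (P (x - y) - P (x + y)) * U y"
        proof (cases "y \<ge> 0")
          case True
          have "P (x + y) \<le> P (x - y)"
          proof (cases "x + y > 2")
            case True then show ?thesis using P0[of "x+y"] Pnn[of "x-y"] by simp
          next
            case False then show ?thesis using Pmono[of "x-y" "x+y"] 4 x True by linarith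
          qed
          then show ?thesis using Unn[OF True] by simp
        next
          case False
          have "U y \<le> 0" using Unn[of "-y"] Uodd[of y] False by simp
          moreover have "P (x - y) \<le> P (x + y)"
          proof (cases "x - y > 2")
            case True then show ?thesis using P0[of "x-y"] Pnn[of "x+y"] by simp
          next
            case False then show ?thesis using Pmono[of "x+y" "x-y"] 4 x \<open>\<not> y \<ge> 0\<close> by linarith
          qed
          ultimately show ?thesis by (simp add: mult_nonpos_nonpos)
        qed
        then show ?thesis using 4 by (auto simp: indicator_def)
      qed
    qed
    have hN: "- N (x - y) - N (x + y) \<le> - ((N (x - y) - N (x + y)) * U y)" for y
    proof -
      have "\<bar>U y\<bar> \<le> 1" using U1[of y] by (cases "-r \<le> y \<and> y \<le> r") (auto simp: indicator_def)
      then have "N (x - y) * U y \<le> N (x - y) * 1" "N (x + y) * (-1) \<le> N (x + y) * U y"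
        using mult_left_mono[of "U y" 1 "N (x - y)"] mult_left_mono[of "-1" "U y" "N (x + y)"] Nnn[of "x-y"] Nnn[of "x+y"] by auto
      then show ?thesis by (simp add: algebra_simps)
    qed
    have hg: "g y \<le> K (x - y) * U y - K (x + y) * U y" for y
      using hP[of y] hN[of y] unfolding g_def KPN by (simp add: algebra_simps)
    have "(\<integral>y. g y \<partial>lborel) \<le> (\<integral>y. K (x - y) * U y - K (x + y) * U y \<partial>lborel)"
      apply (rule integral_mono[OF _ Bochner_Integration.integrable_diff[OF iA1 iA2] hg])
      unfolding g_def using ig1 ig2 ig3 ig4 by auto
    also have "\<dots> = 2 * Top K r u x"
      using Bochner_Integration.integral_diff[OF iA1 iA2] Tdef[of x] Tneg[of x] by simp
    finally have A: "(\<integral>y. g y \<partial>lborel) \<le> 2 * Top K r u x" .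
    have E1: "(\<integral>y. indicator {1<..r} y * P (x - y) \<partial>lborel) = (\<integral>z. indicator {x-r..<x-1} z * P z \<partial>lborel)"
      apply (subst lborel_integral_real_affine[where c="-1" and t=x], simp)
      apply (simp only: abs_neg_one scaleR_one)
      by (rule Bochner_Integration.integral_cong[OF refl]) (auto simp: indicator_def)
    have E2: "(\<integral>y. indicator {-r..<-1} y * P (x + y) \<partial>lborel) = (\<integral>y. indicator {1<..r} y * P (x - y) \<partial>lborel)"
      apply (subst lborel_integral_real_affine[where c="-1" and t=0], simp)
      apply (simp only: abs_neg_one scaleR_one)
      by (rule Bochner_Integration.integral_cong[OF refl]) (auto simp: indicator_def)
    have E3: "(\<integral>y. N (x - y) \<partial>lborel) = (\<integral>y. N y \<partial>lborel)"
      using lborel_integral_real_affine[where f=N and c="-1" and t=x] by simp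
    have E4: "(\<integral>y. N (x + y) \<partial>lborel) = (\<integral>y. N y \<partial>lborel)"
      using lborel_integral_real_affine[where f=N and c=1 and t=x] by simp
    have G: "(\<integral>y. g y \<partial>lborel) = 2 * (\<integral>z. indicator {x-r..<x-1} z * P z \<partial>lborel) - 2 * (\<integral>y. N y \<partial>lborel)"
    proof -
      have "(\<integral>y. g y \<partial>lborel) = (\<integral>y. indicator {1<..r} y * P (x - y) \<partial>lborel)
          + (\<integral>y. indicator {-r..<-1} y * P (x + y) \<partial>lborel) - (\<integral>y. N (x - y) \<partial>lborel) - (\<integral>y. N (x + y) \<partial>lborel)"
        unfolding g_def using ig1 ig2 ig3 ig4 by simp
      then show ?thesis using E1 E2 E3 E4 by simp
    qed
    have LL: "(\<integral>z. indicator {0..2} z * P z \<partial>lborel) \<le> (\<integral>z. indicator {x-r..<x-1} z * P z \<partial>lborel)"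
      by (rule L[OF Pm PC Pnn Pev Pmono]) (use x r_big s_pos in auto)
    show "1 \<le> Top K r u x" using A G LL Kmass' by linarith
  qed
  have Tsmall: "\<And>x. -r \<le> x \<Longrightarrow> x < -1 \<Longrightarrow> Top K r u x \<le> -1"
  proof -
    fix x :: real assume "-r \<le> x" "x < -1"
    then have "1 \<le> Top K r u (-x)" by (intro Tbig) auto
    then show "Top K r u x \<le> -1" using Todd[of x] by simp
  qed
  have sat1: "\<And>t. 1 \<le> t \<Longrightarrow> sat t = 1" and satm1: "\<And>t. t \<le> -1 \<Longrightarrow> sat t = -1"
    and satodd: "\<And>t. sat (-t) = - sat t" and satb: "\<And>t. -1 \<le> sat t \<and> sat t \<le> 1"
    and satmono: "\<And>a b. a \<le> b \<Longrightarrow> sat a \<le> sat b"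
    by (auto simp: sat_def)
  show "(\<lambda>x. sat (Top K r u x)) \<in> B1 r"
    unfolding B1_def
  proof (intro CollectI conjI ballI impI)
    fix x assume "x \<in> {-r..r}" "x > 1"
    then show "sat (Top K r u x) = 1" using Tbig sat1 by auto
  next
    fix x assume "x \<in> {-r..r}" "x < -1"
    then show "sat (Top K r u x) = -1" using Tsmall satm1 by auto
  next
    fix x show "sat (Top K r u (-x)) = - sat (Top K r u x)" using Todd satodd by simp
  next
    show "mono_on {-r..r} (\<lambda>x. sat (Top K r u x))"
    proof (rule mono_onI)
      fix x y assume xy: "x \<in> {-r..r}" "y \<in> {-r..r}" "x \<le> y"
      show "sat (Top K r u x) \<le> sat (Top K r u y)"
      proof (cases "y > 1")
        case True then show ?thesis using xy Tbig[of y] sat1 satb by auto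
      next
        case False
        show ?thesis
        proof (cases "x < -1")
          case True then show ?thesis using xy Tsmall[of x] satm1 satb by auto
        next
          case False
          then show ?thesis using \<open>\<not> y > 1\<close> xy by (auto intro!: satmono Tmono)
        qed
      qed
    qed
  qed
qed

end
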